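(* Let $\rho\in\Delta_{|\mathcal S|}$ have all entries positive, let $\pi_0$ be a non-optimal policy, and let $(\bar s,\bar a)$ be a non-optimal pair with $\pi_0(\bar a\mid\bar s)>0$ and $A^{\pi^*}(\bar s,\bar a)\ge\frac{1-\gamma}{|\mathcal S||\mathcal A|}[f_\rho(\pi_0)-f_\rho(\pi^* )]$. Then for any policy $\pi$, $$\pi(\bar a\mid\bar s)\le\frac{|\mathcal S||\mathcal A|}{(1-\gamma)\rho(\bar s)}\cdot\frac{f_\rho(\pi)-f_\rho(\pi^* )}{f_\rho(\pi_0)-f_\rho(\pi^* )}.$$
   Context: An unregularized infinite-horizon discounted MDP: finite $\mathcal S$, $\mathcal A$, transition probabilities $\mathcal P(s'\mid s,a)$, cost $c$, discount $\gamma\in[0,1)$. A policy assigns $\pi(\cdot\mid s)\in\Delta_{|\mathcal A|}$. $V^\pi(s)=\mathbb E[\sum_{t\ge0}\gamma^tc(s_t,a_t)\mid s_0=s,\ a_t\sim\pi(\cdot\mid s_t),\ s_{t+1}\sim\mathcal P(\cdot\mid s_t,a_t)]$, $Q^\pi(s,a)$ the same with $a_0=a$, $A^\pi(s,a):=Q^\pi(s,a)-V^\pi(s)$. $\pi^*$ is a fixed optimal policy. $f_\rho(\pi):=\sum_s\rho(s)V^\pi(s)$. A pair $(s,a)$ is non-optimal if $\pi^*(a\mid s)=0$; a policy $\pi$ is non-optimal if $f_\rho(\pi)-f_\rho(\pi^* )>0$. (Such a pair $(\bar s,\bar a)$ exists for every non-optimal $\pi_0$.) *)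

theory Defs
  imports "HOL-Analysis.Analysis"
begin

text \<open>Finite MDP: states of finite type 's, actions of finite type 'a.
  Transition kernel P s a s' = P(s' | s,a), cost c s a, policy pol s a = pol(a | s).\<close>

definition stochastic_kernel :: "('s::finite \<Rightarrow> 'a::finite \<Rightarrow> 's \<Rightarrow> real) \<Rightarrow> bool" where
  "stochastic_kernel P \<longleftrightarrow> (\<forall>s a s'. P s a s' \<ge> 0) \<and> (\<forall>s a. (\<Sum>s'\<in>UNIV. P s a s') = 1)"

definition is_policy :: "('s::finite \<Rightarrow> 'a::finite \<Rightarrow> real) \<Rightarrow> bool" where
  "is_policy pol \<longleftrightarrow> (\<forall>s a. pol s a \<ge> 0) \<and> (\<forall>s. (\<Sum>a\<in>UNIV. pol s a) = 1)"

definition is_distribution :: "('s::finite \<Rightarrow> real) \<Rightarrow> bool" where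
  "is_distribution rho \<longleftrightarrow> (\<forall>s. rho s \<ge> 0) \<and> (\<Sum>s\<in>UNIV. rho s) = 1"

fun state_dist :: "('s::finite \<Rightarrow> 'a::finite \<Rightarrow> 's \<Rightarrow> real) \<Rightarrow> ('s \<Rightarrow> 'a \<Rightarrow> real)
    \<Rightarrow> 's \<Rightarrow> nat \<Rightarrow> 's \<Rightarrow> real" where
  "state_dist P pol s 0 s' = (if s' = s then 1 else 0)"
| "state_dist P pol s (Suc t) s' =
     (\<Sum>u\<in>UNIV. state_dist P pol s t u * (\<Sum>a\<in>UNIV. pol u a * P u a s'))"

definition pol_cost :: "('s::finite \<Rightarrow> 'a::finite \<Rightarrow> real) \<Rightarrow> ('s \<Rightarrow> 'a \<Rightarrow> real) \<Rightarrow> 's \<Rightarrow> real" where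
  "pol_cost c pol u = (\<Sum>a\<in>UNIV. pol u a * c u a)"

definition Vf :: "('s::finite \<Rightarrow> 'a::finite \<Rightarrow> 's \<Rightarrow> real) \<Rightarrow> ('s \<Rightarrow> 'a \<Rightarrow> real) \<Rightarrow> real
    \<Rightarrow> ('s \<Rightarrow> 'a \<Rightarrow> real) \<Rightarrow> 's \<Rightarrow> real" where
  "Vf P c \<gamma> pol s = (\<Sum>t. \<gamma> ^ t * (\<Sum>u\<in>UNIV. state_dist P pol s t u * pol_cost c pol u))"

text \<open>Q^pol(s,a) = E[sum_t gamma^t c(s_t,a_t) | s_0 = s, a_0 = a]: the first step
  costs c(s,a), after which the chain starts afresh from s_1 ~ P(.|s,a).\<close>
definition Qf :: "('s::finite \<Rightarrow> 'a::finite \<Rightarrow> 's \<Rightarrow> real) \<Rightarrow> ('s \<Rightarrow> 'a \<Rightarrow> real) \<Rightarrow> real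
    \<Rightarrow> ('s \<Rightarrow> 'a \<Rightarrow> real) \<Rightarrow> 's \<Rightarrow> 'a \<Rightarrow> real" where
  "Qf P c \<gamma> pol s a = c s a + \<gamma> * (\<Sum>s'\<in>UNIV. P s a s' * Vf P c \<gamma> pol s')"

definition Af :: "('s::finite \<Rightarrow> 'a::finite \<Rightarrow> 's \<Rightarrow> real) \<Rightarrow> ('s \<Rightarrow> 'a \<Rightarrow> real) \<Rightarrow> real
    \<Rightarrow> ('s \<Rightarrow> 'a \<Rightarrow> real) \<Rightarrow> 's \<Rightarrow> 'a \<Rightarrow> real" where
  "Af P c \<gamma> pol s a = Qf P c \<gamma> pol s a - Vf P c \<gamma> pol s"

definition f_rho :: "('s::finite \<Rightarrow> 'a::finite \<Rightarrow> 's \<Rightarrow> real) \<Rightarrow> ('s \<Rightarrow> 'a \<Rightarrow> real) \<Rightarrow> real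
    \<Rightarrow> ('s \<Rightarrow> real) \<Rightarrow> ('s \<Rightarrow> 'a \<Rightarrow> real) \<Rightarrow> real" where
  "f_rho P c \<gamma> rho pol = (\<Sum>s\<in>UNIV. rho s * Vf P c \<gamma> pol s)"

definition optimal_policy :: "('s::finite \<Rightarrow> 'a::finite \<Rightarrow> 's \<Rightarrow> real) \<Rightarrow> ('s \<Rightarrow> 'a \<Rightarrow> real) \<Rightarrow> real
    \<Rightarrow> ('s \<Rightarrow> 'a \<Rightarrow> real) \<Rightarrow> bool" where
  "optimal_policy P c \<gamma> polstar \<longleftrightarrow> is_policy polstar \<and>
     (\<forall>pol. is_policy pol \<longrightarrow> (\<forall>s. Vf P c \<gamma> polstar s \<le> Vf P c \<gamma> pol s))"

end

theory Submission
  imports Defs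
begin

lemma delta1: fixes X :: "'b::finite \<Rightarrow> real" shows "(\<Sum>u\<in>UNIV. (if u = s then 1 else 0) * X u) = X s"
proof -
  have "(\<Sum>u\<in>UNIV. (if u = s then 1 else 0) * X u) = (\<Sum>u\<in>UNIV. (if u = s then X u else 0))"
    by (intro sum.cong) auto
  then show ?thesis by simp
qed

lemma delta2: fixes X :: "'b::finite \<Rightarrow> real" shows "(\<Sum>u\<in>UNIV. X u * (if v = u then 1 else 0)) = X v"
proof -
  have "(\<Sum>u\<in>UNIV. X u * (if v = u then 1 else 0)) = (\<Sum>u\<in>UNIV. (if v = u then X u else 0))"
    by (intro sum.cong) auto
  then show ?thesis by simp
qed

lemma sw0: fixes f :: "'b \<Rightarrow> real" shows "(\<Sum>x\<in>A. \<Sum>y\<in>B. f y * g y x) = (\<Sum>y\<in>B. f y * (\<Sum>x\<in>A. g y x))"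
  by (subst sum.swap) (simp add: sum_distrib_left)

lemma sw1: fixes f :: "'b \<Rightarrow> real" shows "(\<Sum>x\<in>A. (\<Sum>y\<in>B. f y * g y x) * h x) = (\<Sum>y\<in>B. f y * (\<Sum>x\<in>A. g y x * h x))"
proof -
  have "(\<Sum>x\<in>A. (\<Sum>y\<in>B. f y * g y x) * h x) = (\<Sum>x\<in>A. \<Sum>y\<in>B. f y * (g y x * h x))"
    by (simp add: sum_distrib_right mult.assoc)
  also have "\<dots> = (\<Sum>y\<in>B. f y * (\<Sum>x\<in>A. g y x * h x))" by (rule sw0)
  finally show ?thesis .
qed

lemma M_props:
  assumes "stochastic_kernel P" "is_policy pol"
  shows "(\<Sum>a\<in>UNIV. pol u a * P u a s') \<ge> 0" "(\<Sum>s'\<in>UNIV. (\<Sum>a\<in>UNIV. pol u a * P u a s')) = 1"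
proof -
  show "(\<Sum>a\<in>UNIV. pol u a * P u a s') \<ge> 0"
    using assms unfolding stochastic_kernel_def is_policy_def by (auto intro!: sum_nonneg)
  have "(\<Sum>s'\<in>UNIV. (\<Sum>a\<in>UNIV. pol u a * P u a s')) = (\<Sum>a\<in>UNIV. pol u a * (\<Sum>s'\<in>UNIV. P u a s'))"
    by (rule sw0)
  then show "(\<Sum>s'\<in>UNIV. (\<Sum>a\<in>UNIV. pol u a * P u a s')) = 1"
    using assms unfolding stochastic_kernel_def is_policy_def by simp
qed

lemma sd_basic:
  assumes "stochastic_kernel P" "is_policy pol"
  shows "(\<forall>u. state_dist P pol s t u \<ge> 0) \<and> (\<Sum>u\<in>UNIV. state_dist P pol s t u) = 1"
proof (induction t)
  case 0 then show ?case by simp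
next
  case (Suc t)
  have nn: "\<forall>u. state_dist P pol s (Suc t) u \<ge> 0"
    using Suc assms unfolding stochastic_kernel_def is_policy_def
    by (auto intro!: sum_nonneg mult_nonneg_nonneg)
  have "(\<Sum>v\<in>UNIV. state_dist P pol s (Suc t) v)
      = (\<Sum>u\<in>UNIV. state_dist P pol s t u * (\<Sum>v\<in>UNIV. (\<Sum>a\<in>UNIV. pol u a * P u a v)))"
    unfolding state_dist.simps by (rule sw0)
  also have "\<dots> = 1" using Suc M_props(2)[OF assms] by simp
  finally show ?case using nn by simp
qed

lemma sd_back:
  "state_dist P pol s (Suc t) v = (\<Sum>s'\<in>UNIV. (\<Sum>a\<in>UNIV. pol s a * P s a s') * state_dist P pol s' t v)"
proof (induction t arbitrary: v)
  case 0 then show ?case unfolding state_dist.simps delta1 delta2 by (rule refl)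
next
  case (Suc t)
  have "state_dist P pol s (Suc (Suc t)) v
     = (\<Sum>u\<in>UNIV. (\<Sum>s'\<in>UNIV. (\<Sum>a\<in>UNIV. pol s a * P s a s') * state_dist P pol s' t u) * (\<Sum>a\<in>UNIV. pol u a * P u a v))"
    unfolding state_dist.simps(2)[of P pol s "Suc t"] Suc by (rule refl)
  also have "\<dots> = (\<Sum>s'\<in>UNIV. (\<Sum>a\<in>UNIV. pol s a * P s a s') * (\<Sum>u\<in>UNIV. state_dist P pol s' t u * (\<Sum>a\<in>UNIV. pol u a * P u a v)))"
    by (rule sw1)
  finally show ?case by simp
qed

lemma bellman:
  assumes P: "stochastic_kernel P" and pol: "is_policy pol" and g0: "0 \<le> \<gamma>" and g1: "\<gamma> < 1"
  shows "Vf P c \<gamma> pol s = pol_cost c pol s + \<gamma> * (\<Sum>a\<in>UNIV. pol s a * (\<Sum>s'\<in>UNIV. P s a s' * Vf P c \<gamma> pol s'))"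
proof -
  define M where "M u s' = (\<Sum>a\<in>UNIV. pol u a * P u a s')" for u s'
  define e where "e t s = (\<Sum>u\<in>UNIV. state_dist P pol s t u * pol_cost c pol u)" for t s
  define B where "B = (\<Sum>u\<in>UNIV. \<bar>pol_cost c pol u\<bar>)"
  have eb: "norm (\<gamma>^t * e t s) \<le> \<gamma>^t * B" for t s
  proof -
    have "\<bar>e t s\<bar> \<le> (\<Sum>u\<in>UNIV. \<bar>state_dist P pol s t u * pol_cost c pol u\<bar>)"
      unfolding e_def by (rule sum_abs)
    also have "\<dots> \<le> B" unfolding B_def
    proof (rule sum_mono)
      fix u
      have d0: "state_dist P pol s t u \<ge> 0" using sd_basic[OF P pol] by blast
      have "state_dist P pol s t u \<le> (\<Sum>u\<in>UNIV. state_dist P pol s t u)"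
        using sd_basic[OF P pol] by (intro member_le_sum) auto
      then have d1: "state_dist P pol s t u \<le> 1" using sd_basic[OF P pol] by simp
      show "\<bar>state_dist P pol s t u * pol_cost c pol u\<bar> \<le> \<bar>pol_cost c pol u\<bar>"
        using d0 d1 by (simp add: abs_mult mult_left_le_one_le)
    qed
    finally show ?thesis using g0 by (simp add: abs_mult mult_left_mono)
  qed
  have sm: "summable (\<lambda>t. \<gamma>^t * e t s)" for s
    by (rule summable_comparison_test[OF _ summable_mult2[OF summable_geometric]])
       (use eb g0 g1 in auto)
  have V: "Vf P c \<gamma> pol s = (\<Sum>t. \<gamma>^t * e t s)" for s unfolding Vf_def e_def by simp
  have es: "e (Suc t) s = (\<Sum>s'\<in>UNIV. M s s' * e t s')" for t s
    unfolding e_def M_def sd_back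
    by (rule sw1)
  have e0: "e 0 s = pol_cost c pol s" for s unfolding e_def state_dist.simps delta1 by (rule refl)
  have "(\<Sum>t. \<gamma>^(Suc t) * e (Suc t) s) = (\<Sum>t. \<gamma>^t * e t s) - e 0 s"
    using suminf_split_head[OF sm[of s]] by simp
  moreover have "(\<Sum>t. \<gamma>^(Suc t) * e (Suc t) s) = \<gamma> * (\<Sum>s'\<in>UNIV. M s s' * Vf P c \<gamma> pol s')"
  proof -
    have "(\<Sum>t. \<gamma>^(Suc t) * e (Suc t) s) = (\<Sum>t. \<gamma> * (\<Sum>s'\<in>UNIV. M s s' * (\<gamma>^t * e t s')))"
      by (simp add: es sum_distrib_left mult_ac)
    also have "\<dots> = \<gamma> * (\<Sum>t. (\<Sum>s'\<in>UNIV. M s s' * (\<gamma>^t * e t s')))"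
      by (rule suminf_mult) (intro summable_sum summable_mult sm)
    also have "(\<Sum>t. (\<Sum>s'\<in>UNIV. M s s' * (\<gamma>^t * e t s'))) = (\<Sum>s'\<in>UNIV. (\<Sum>t. M s s' * (\<gamma>^t * e t s')))"
      by (rule suminf_sum) (intro summable_mult sm)
    also have "\<dots> = (\<Sum>s'\<in>UNIV. M s s' * Vf P c \<gamma> pol s')"
      by (intro sum.cong refl) (simp add: V suminf_mult sm)
    finally show ?thesis .
  qed
  ultimately have "Vf P c \<gamma> pol s = pol_cost c pol s + \<gamma> * (\<Sum>s'\<in>UNIV. M s s' * Vf P c \<gamma> pol s')"
    using V e0 by simp
  also have "(\<Sum>s'\<in>UNIV. M s s' * Vf P c \<gamma> pol s') = (\<Sum>a\<in>UNIV. pol s a * (\<Sum>s'\<in>UNIV. P s a s' * Vf P c \<gamma> pol s'))"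
    unfolding M_def by (rule sw1)
  finally show ?thesis .
qed


lemma min_arg:
  fixes D g :: "'s::finite \<Rightarrow> real" and M :: "'s \<Rightarrow> 's \<Rightarrow> real"
  assumes Mn: "\<And>u s'. M u s' \<ge> 0" and Ms: "\<And>u. (\<Sum>s'\<in>UNIV. M u s') = 1"
    and g0: "0 \<le> \<gamma>" and g1: "\<gamma> < 1"
    and eq: "\<And>u. D u = g u + \<gamma> * (\<Sum>s'\<in>UNIV. M u s' * D s')"
    and gn: "\<And>u. g u \<ge> 0"
  shows "D u \<ge> g u"
proof -
  define m where "m = Min (range D)"
  have mle: "m \<le> D v" for v unfolding m_def by (rule Min_le) auto
  have "m \<in> range D" unfolding m_def by (rule Min_in) auto
  then obtain sm where sm: "D sm = m" by auto
  have low: "(\<Sum>s'\<in>UNIV. M v s' * D s') \<ge> m" for v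
  proof -
    have "(\<Sum>s'\<in>UNIV. M v s' * D s') \<ge> (\<Sum>s'\<in>UNIV. M v s' * m)"
      by (intro sum_mono mult_left_mono mle Mn)
    also have "(\<Sum>s'\<in>UNIV. M v s' * m) = m" using Ms by (simp add: sum_distrib_right[symmetric])
    finally show ?thesis .
  qed
  have "m \<ge> \<gamma> * m" using eq[of sm] sm gn[of sm] mult_left_mono[OF low[of sm] g0] by linarith
  then have "(1 - \<gamma>) * m \<ge> 0" by (simp add: algebra_simps)
  then have m0: "m \<ge> 0" using g1 by (simp add: zero_le_mult_iff)
  show ?thesis using eq[of u] mult_nonneg_nonneg[OF g0 order_trans[OF m0 low[of u]]] by linarith
qed

lemma diff_eq:
  assumes P: "stochastic_kernel P" and pol: "is_policy pol" and g0: "0 \<le> \<gamma>" and g1: "\<gamma> < 1"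
  shows "Vf P c \<gamma> pol u - Vf P c \<gamma> sig u =
     ((\<Sum>a\<in>UNIV. pol u a * Qf P c \<gamma> sig u a) - Vf P c \<gamma> sig u) +
     \<gamma> * (\<Sum>s'\<in>UNIV. (\<Sum>a\<in>UNIV. pol u a * P u a s') * (Vf P c \<gamma> pol s' - Vf P c \<gamma> sig s'))"
proof -
  have X: "(\<Sum>s'\<in>UNIV. (\<Sum>a\<in>UNIV. pol u a * P u a s') * F s') = (\<Sum>a\<in>UNIV. pol u a * (\<Sum>s'\<in>UNIV. P u a s' * F s'))" for F
    by (rule sw1)
  have Q: "(\<Sum>a\<in>UNIV. pol u a * Qf P c \<gamma> sig u a) = pol_cost c pol u + \<gamma> * (\<Sum>a\<in>UNIV. pol u a * (\<Sum>s'\<in>UNIV. P u a s' * Vf P c \<gamma> sig s'))"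
    unfolding Qf_def pol_cost_def by (simp add: algebra_simps sum.distrib sum_distrib_left)
  have Dx: "(\<Sum>s'\<in>UNIV. (\<Sum>a\<in>UNIV. pol u a * P u a s') * (Vf P c \<gamma> pol s' - Vf P c \<gamma> sig s'))
     = (\<Sum>s'\<in>UNIV. (\<Sum>a\<in>UNIV. pol u a * P u a s') * Vf P c \<gamma> pol s') - (\<Sum>s'\<in>UNIV. (\<Sum>a\<in>UNIV. pol u a * P u a s') * Vf P c \<gamma> sig s')"
    by (simp add: algebra_simps sum_subtractf)
  show ?thesis unfolding Dx X Q using bellman[OF P pol g0 g1, of c u] by (simp add: algebra_simps)
qed

lemma adv_nonneg:
  assumes P: "stochastic_kernel P" and g0: "0 \<le> \<gamma>" and g1: "\<gamma> < 1"
    and opt: "optimal_policy P c \<gamma> sig"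
  shows "Af P c \<gamma> sig s0 a0 \<ge> 0"
proof (rule ccontr)
  assume neg: "\<not> ?thesis"
  have sig: "is_policy sig" using opt unfolding optimal_policy_def by blast
  define pol where "pol s a = (if s = s0 then (if a = a0 then 1 else 0) else sig s a)" for s a
  have pol: "is_policy pol"
    unfolding is_policy_def
  proof (intro conjI allI)
    fix s a show "pol s a \<ge> 0" using sig unfolding pol_def is_policy_def by auto
  next
    fix s show "(\<Sum>a\<in>UNIV. pol s a) = 1"
    proof (cases "s = s0")
      case True then show ?thesis by (simp add: pol_def)
    next
      case False then show ?thesis using sig by (simp add: pol_def is_policy_def)
    qed
  qed
  define D where "D u = Vf P c \<gamma> sig u - Vf P c \<gamma> pol u" for u
  define g where "g u = Vf P c \<gamma> sig u - (\<Sum>a\<in>UNIV. pol u a * Qf P c \<gamma> sig u a)" for u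
  define M where "M u s' = (\<Sum>a\<in>UNIV. pol u a * P u a s')" for u s'
  have eq: "D u = g u + \<gamma> * (\<Sum>s'\<in>UNIV. M u s' * D s')" for u
  proof -
    have S: "(\<Sum>s'\<in>UNIV. M u s' * D s') = - (\<Sum>s'\<in>UNIV. M u s' * (Vf P c \<gamma> pol s' - Vf P c \<gamma> sig s'))"
      unfolding D_def sum_negf[symmetric] by (intro sum.cong) (auto simp: algebra_simps)
    have E: "Vf P c \<gamma> pol u - Vf P c \<gamma> sig u = ((\<Sum>a\<in>UNIV. pol u a * Qf P c \<gamma> sig u a) - Vf P c \<gamma> sig u)
        + \<gamma> * (\<Sum>s'\<in>UNIV. M u s' * (Vf P c \<gamma> pol s' - Vf P c \<gamma> sig s'))"
      unfolding M_def by (rule diff_eq[OF P pol g0 g1])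
    show ?thesis unfolding S unfolding D_def g_def using E by (simp only: mult_minus_right)
  qed
  have bs: "Vf P c \<gamma> sig u = (\<Sum>a\<in>UNIV. sig u a * Qf P c \<gamma> sig u a)" for u
  proof -
    have "(\<Sum>a\<in>UNIV. sig u a * Qf P c \<gamma> sig u a) = pol_cost c sig u + \<gamma> * (\<Sum>a\<in>UNIV. sig u a * (\<Sum>s'\<in>UNIV. P u a s' * Vf P c \<gamma> sig s'))"
      unfolding Qf_def pol_cost_def by (simp add: algebra_simps sum.distrib sum_distrib_left)
    then show ?thesis using bellman[OF P sig g0 g1, of c u] by simp
  qed
  have gs0: "g s0 = - Af P c \<gamma> sig s0 a0"
    unfolding g_def Af_def pol_def by (simp add: if_distrib[of "\<lambda>x. x * _"] cong: if_cong)
  have gn: "g u \<ge> 0" for u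
  proof (cases "u = s0")
    case True then show ?thesis using gs0 neg by simp
  next
    case False then show ?thesis unfolding g_def pol_def using bs[of u] by simp
  qed
  have "D s0 \<ge> g s0"
    by (rule min_arg[where M=M, OF _ _ g0 g1 eq gn]) (use M_props[OF P pol] in \<open>auto simp: M_def\<close>)
  then have "Vf P c \<gamma> pol s0 < Vf P c \<gamma> sig s0" unfolding D_def using gs0 neg by simp
  moreover have "Vf P c \<gamma> sig s0 \<le> Vf P c \<gamma> pol s0" using opt pol unfolding optimal_policy_def by blast
  ultimately show False by simp
qed


lemma tail:
  fixes K F \<Delta> r p A \<gamma> :: real
  assumes K0: "K > 0" and d0: "\<Delta> > 0" and r0: "r > 0" and g1: "\<gamma> < 1" and p0: "p \<ge> 0"
    and F: "r * (p * A) \<le> F" and A: "A \<ge> (1 - \<gamma>) / K * \<Delta>"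
  shows "p \<le> K / ((1 - \<gamma>) * r) * (F / \<Delta>)"
proof -
  have "r * (p * ((1 - \<gamma>) / K * \<Delta>)) \<le> r * (p * A)"
    using A p0 r0 by (intro mult_left_mono) auto
  also have "\<dots> \<le> F" by (rule F)
  finally have "(p * ((1 - \<gamma>) * r * \<Delta>)) / K \<le> F" by (simp add: mult_ac)
  then have "p * ((1 - \<gamma>) * r * \<Delta>) \<le> F * K" using K0 by (simp add: pos_divide_le_eq)
  moreover have "(1 - \<gamma>) * r * \<Delta> > 0" using g1 r0 d0 by simp
  ultimately have "p \<le> F * K / ((1 - \<gamma>) * r * \<Delta>)" by (simp add: pos_le_divide_eq)
  also have "F * K / ((1 - \<gamma>) * r * \<Delta>) = K / ((1 - \<gamma>) * r) * (F / \<Delta>)" by simp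
  finally show ?thesis .
qed

theorem lemma3p8:
  fixes P :: "'s::finite \<Rightarrow> 'a::finite \<Rightarrow> 's \<Rightarrow> real"
    and c :: "'s \<Rightarrow> 'a \<Rightarrow> real"
    and \<gamma> :: real
    and polstar pol0 pol :: "'s \<Rightarrow> 'a \<Rightarrow> real"
    and rho :: "'s \<Rightarrow> real"
    and sb :: 's and ab :: 'a
  assumes "stochastic_kernel P"
    and "0 \<le> \<gamma>" and "\<gamma> < 1"
    and "optimal_policy P c \<gamma> polstar"
    and "is_distribution rho" and "\<forall>s. rho s > 0"
    and "is_policy pol0"
    and "f_rho P c \<gamma> rho pol0 - f_rho P c \<gamma> rho polstar > 0"
    and "polstar sb ab = 0"
    and "pol0 sb ab > 0"
    and "Af P c \<gamma> polstar sb ab \<ge>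
           (1 - \<gamma>) / (real CARD('s) * real CARD('a)) *
           (f_rho P c \<gamma> rho pol0 - f_rho P c \<gamma> rho polstar)"
    and "is_policy pol"
  shows "pol sb ab \<le>
           (real CARD('s) * real CARD('a)) / ((1 - \<gamma>) * rho sb) *
           ((f_rho P c \<gamma> rho pol - f_rho P c \<gamma> rho polstar) /
            (f_rho P c \<gamma> rho pol0 - f_rho P c \<gamma> rho polstar))"
proof -
  note P = assms(1) and g0 = assms(2) and g1 = assms(3) and opt = assms(4) and pol = assms(12)
  have sig: "is_policy polstar" using opt unfolding optimal_policy_def by blast
  define D where "D u = Vf P c \<gamma> pol u - Vf P c \<gamma> polstar u" for u
  define g where "g u = (\<Sum>a\<in>UNIV. pol u a * Qf P c \<gamma> polstar u a) - Vf P c \<gamma> polstar u" for u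
  define M where "M u s' = (\<Sum>a\<in>UNIV. pol u a * P u a s')" for u s'
  have eq: "D u = g u + \<gamma> * (\<Sum>s'\<in>UNIV. M u s' * D s')" for u
    unfolding D_def g_def M_def by (rule diff_eq[OF P pol g0 g1])
  have gA: "g u = (\<Sum>a\<in>UNIV. pol u a * Af P c \<gamma> polstar u a)" for u
  proof -
    have "(\<Sum>a\<in>UNIV. pol u a * Af P c \<gamma> polstar u a) = (\<Sum>a\<in>UNIV. pol u a * Qf P c \<gamma> polstar u a) - (\<Sum>a\<in>UNIV. pol u a) * Vf P c \<gamma> polstar u"
      unfolding Af_def by (simp add: algebra_simps sum_subtractf sum_distrib_right)
    then show ?thesis using pol unfolding g_def is_policy_def by simp
  qed
  have An: "Af P c \<gamma> polstar u a \<ge> 0" for u a by (rule adv_nonneg[OF P g0 g1 opt])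
  have pn: "pol u a \<ge> 0" for u a using pol unfolding is_policy_def by blast
  have gn: "g u \<ge> 0" for u unfolding gA using An pn by (auto intro!: sum_nonneg)
  have Dg: "D u \<ge> g u" for u
    by (rule min_arg[where M=M, OF _ _ g0 g1 eq gn]) (use M_props[OF P pol] in \<open>auto simp: M_def\<close>)
  have gsb: "g sb \<ge> pol sb ab * Af P c \<gamma> polstar sb ab"
    unfolding gA by (rule member_le_sum) (use An pn in auto)
  have rn: "rho s \<ge> 0" for s using assms(6) by (simp add: less_imp_le)
  have "f_rho P c \<gamma> rho pol - f_rho P c \<gamma> rho polstar = (\<Sum>s\<in>UNIV. rho s * D s)"
    unfolding f_rho_def D_def by (simp add: algebra_simps sum_subtractf)
  also have "\<dots> \<ge> rho sb * D sb"
    by (rule member_le_sum) (use rn Dg gn in \<open>auto intro!: mult_nonneg_nonneg order_trans[OF gn Dg]\<close>)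
  finally have F: "f_rho P c \<gamma> rho pol - f_rho P c \<gamma> rho polstar \<ge> rho sb * (pol sb ab * Af P c \<gamma> polstar sb ab)"
    using mult_left_mono[OF order_trans[OF gsb Dg] rn[of sb]] by linarith
  show ?thesis
    by (rule tail[OF _ assms(8) assms(6)[rule_format] g1 pn F assms(11)]) simp
qed

end
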